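(* Let $M=(\Gamma,\Sigma,P,\delta)$ be a linear bounded deterministic Turing machine, let $x\in\Sigma^*$ be an input with $|x|=n\geq 1$, and let $Sys_M$ be the interaction system associated with $M$ and $x$ as defined in the context. Then $M$ accepts $x$ (i.e. $M$ started on $x$ halts in state $p^Y$) if and only if some global state $q=(q_0,\dots,q_{n+1})$ of $Sys_M$ is reachable such that $q_i=(p^Y,\gamma)$ for some $i\in\{0,\dots,n+1\}$ and some $\gamma\in\Gamma$.
   Context: Interaction systems. Let $K=\{1,\dots,n\}$ (or any finite index set) be a set of components and $\{A_i\}_{i\in K}$ a family of pairwise disjoint finite sets of ports. An interaction is a nonempty set $\alpha\subseteq\bigcup_{i\in K}A_i$ with $|\alpha\cap A_i|\le 1$ for all $i$. An interaction set $Int$ is a set of interactions such that every port occurs in at least one interaction; $IM=(K,\{A_i\}_{i\in K},Int)$ is an interaction model. An interaction system is $Sys=(IM,\{T_i\}_{i\in K})$ where $T_i=(Q_i,A_i,\to_i,q_i^0)$ is a labeled transition system with finite state set $Q_i$, transition relation $\to_i\subseteq Q_i\times A_i\times Q_i$ and initial state $q_i^0$. Its global behavior is the transition system with states $Q=\prod_{i\in K}Q_i$, initial state $q^0=(q_i^0)_{i\in K}$, and $q\xrightarrow{\alpha}q'$ (for $\alpha\in Int$) iff for all $i\in K$: if $\alpha\cap A_i=\{a_i\}$ then $(q_i,a_i,q_i')\in\to_i$, and if $\alpha\cap A_i=\emptyset$ then $q_i=q_i'$. A global state is reachable if there is a path from $q^0$ to it in the global behavior. Turing machines. A DTM is $M=(\Gamma,\Sigma,P,\delta)$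 with finite tape alphabet $\Gamma$, input alphabet $\Sigma\subseteq\Gamma$, blank $b\in\Gamma\setminus\Sigma$, finite state set $P$ containing initial state $p^0$ and halt states $p^Y,p^N$, and $\delta:(P\setminus\{p^Y,p^N\})\times\Gamma\to P\times\Gamma\times\{-1,+1\}$. The tape is two-way infinite with cells indexed by integers; input $x=x^1\cdots x^n$ is written on cells $1,\dots,n$ (all other cells blank), the machine starts in $p^0$ with head on cell $1$. $M$ is linear bounded if no computation on an input of length $n$ uses cells other than $0,\dots,n+1$. Construction of $Sys_M$. Components $K=\{0,\dots,n+1\}$ (one per tape cell). Let $P'=P\setminus\{p^Y,p^N\}$. For $1\le i\le n$: $A_i=\{(p,\gamma)_i^1,(p,\gamma)_i^2 : p\in P',\gamma\in\Gamma\}$. $A_0=\{(p,\gamma)_0^1: p\in P',\gamma\in\Gamma,\ \delta(p,\gamma)\text{ has direction }+1\}\cup\{(p,\gamma)_0^2: p\in P',\gamma\in\Gamma,\ \delta(p,\gamma)\text{ has direction }-1\}$, and $A_{n+1}=\{(p,\gamma)_{n+1}^1: \delta(p,\gamma)\text{ has direction }-1\}\cup\{(p,\gamma)_{n+1}^2: \delta(p,\gamma)\text{ has direction }+1\}$ (with $p\in P',\gamma\in\Gamma$). Interactions: $Int=\{\{(p,\gamma)_i^1,(p,\gamma)_{i+T}^2\} : p\in P',\gamma\in\Gamma,\ \delta(p,\gamma)=(p',\gamma',T),\ 0\le i\le n+1,\ 0\le i+T\le n+1\}$. For each $i$, $Q_i=\{(p,\gamma): p\in P\cup\{s\},\gamma\in\Gamma\}$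 where $s\notin P$ is a fresh symbol ($(s,\gamma)$ means cell content $\gamma$, head elsewhere; $(p,\gamma)$ with $p\in P$ means head on this cell in state $p$ reading $\gamma$). Initial states: $q_0^0=(s,b)$, $q_1^0=(p^0,x^1)$, $q_i^0=(s,x^i)$ for $2\le i\le n$, $q_{n+1}^0=(s,b)$. Transitions $\to_i$ (only for ports belonging to $A_i$): (a) $(p,\gamma)\xrightarrow{(p,\gamma)_i^1}(s,\gamma')$ whenever $p\in P'$ and $\delta(p,\gamma)=(p',\gamma',T)$ for some $p',T$; (b) $(s,\tilde\gamma)\xrightarrow{(p,\gamma)_i^2}(p',\tilde\gamma)$ for all $\tilde\gamma\in\Gamma$ whenever $p\in P'$ and $\delta(p,\gamma)=(p',\gamma',T)$ for some $\gamma',T$. *)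

theory Defs
  imports Main "HOL-Library.FuncSet"
begin

definition global_step ::
  "'k set \<Rightarrow> ('k \<Rightarrow> 'a set) \<Rightarrow> 'a set set \<Rightarrow> ('k \<Rightarrow> 's set) \<Rightarrow> ('k \<Rightarrow> ('s \<times> 'a \<times> 's) set)
    \<Rightarrow> 'a set \<Rightarrow> (('k \<Rightarrow> 's) \<times> ('k \<Rightarrow> 's)) set" where
  "global_step K A Inter_set Q Tr \<alpha> =
     {(q, q'). \<alpha> \<in> Inter_set \<and> q \<in> PiE K Q \<and> q' \<in> PiE K Q \<and>
        (\<forall>i\<in>K. (\<forall>a. \<alpha> \<inter> A i = {a} \<longrightarrow> (q i, a, q' i) \<in> Tr i) \<and>
                 (\<alpha> \<inter> A i = {} \<longrightarrow> q i = q' i))}"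

definition global_reachable ::
  "'k set \<Rightarrow> ('k \<Rightarrow> 'a set) \<Rightarrow> 'a set set \<Rightarrow> ('k \<Rightarrow> 's set) \<Rightarrow> ('k \<Rightarrow> ('s \<times> 'a \<times> 's) set)
    \<Rightarrow> ('k \<Rightarrow> 's) \<Rightarrow> ('k \<Rightarrow> 's) \<Rightarrow> bool" where
  "global_reachable K A Inter_set Q Tr q0 q \<longleftrightarrow>
     (q0, q) \<in> (\<Union>\<alpha>\<in>Inter_set. global_step K A Inter_set Q Tr \<alpha>)\<^sup>*"

text \<open>A DTM: tape alphabet G (Gamma), input alphabet S (Sigma), blank b, state set P with
  initial state p0 and halting states pY, pN, transition function d, given as a total HOL
  function that is only relevant on (P - {pY,pN}) \<times> G.\<close>

definition is_DTM ::
  "'g set \<Rightarrow> 'g set \<Rightarrow> 'g \<Rightarrow> 'p set \<Rightarrow> 'p \<Rightarrow> 'p \<Rightarrow> 'p \<Rightarrow> ('p \<Rightarrow> 'g \<Rightarrow> 'p \<times> 'g \<times> int) \<Rightarrow> bool" where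
  "is_DTM G S b P p0 pY pN d \<longleftrightarrow>
     finite G \<and> S \<subseteq> G \<and> b \<in> G \<and> b \<notin> S \<and> finite P \<and> p0 \<in> P \<and> pY \<in> P \<and> pN \<in> P \<and>
     (\<forall>p \<in> P - {pY, pN}. \<forall>g \<in> G.
        fst (d p g) \<in> P \<and> fst (snd (d p g)) \<in> G \<and> snd (snd (d p g)) \<in> {-1, 1})"

type_synonym ('p, 'g) config = "'p \<times> (int \<Rightarrow> 'g) \<times> int"

definition tm_step ::
  "'p \<Rightarrow> 'p \<Rightarrow> ('p \<Rightarrow> 'g \<Rightarrow> 'p \<times> 'g \<times> int) \<Rightarrow> (('p, 'g) config \<times> ('p, 'g) config) set" where
  "tm_step pY pN d =
     {((p, t, h), (p', t', h')). p \<noteq> pY \<and> p \<noteq> pN \<and>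
        p' = fst (d p (t h)) \<and> t' = t(h := fst (snd (d p (t h)))) \<and>
        h' = h + snd (snd (d p (t h)))}"

definition tm_init :: "'g \<Rightarrow> 'p \<Rightarrow> 'g list \<Rightarrow> ('p, 'g) config" where
  "tm_init b p0 x =
     (p0, (\<lambda>c. if 1 \<le> c \<and> c \<le> int (length x) then x ! (nat c - 1) else b), 1)"

text \<open>M accepts x: the computation on x reaches (and hence halts in) the state pY.\<close>
definition tm_accepts ::
  "'g \<Rightarrow> 'p \<Rightarrow> 'p \<Rightarrow> 'p \<Rightarrow> ('p \<Rightarrow> 'g \<Rightarrow> 'p \<times> 'g \<times> int) \<Rightarrow> 'g list \<Rightarrow> bool" where
  "tm_accepts b p0 pY pN d x \<longleftrightarrow>
     (\<exists>t h. (tm_init b p0 x, (pY, t, h)) \<in> (tm_step pY pN d)\<^sup>*)"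

definition linear_bounded ::
  "'g set \<Rightarrow> 'g \<Rightarrow> 'p \<Rightarrow> 'p \<Rightarrow> 'p \<Rightarrow> ('p \<Rightarrow> 'g \<Rightarrow> 'p \<times> 'g \<times> int) \<Rightarrow> bool" where
  "linear_bounded S b p0 pY pN d \<longleftrightarrow>
     (\<forall>x \<in> lists S. \<forall>p t h. (tm_init b p0 x, (p, t, h)) \<in> (tm_step pY pN d)\<^sup>* \<longrightarrow>
        0 \<le> h \<and> h \<le> int (length x) + 1)"

text \<open>Components are 0..n+1. A port (p,g)_i^j is encoded as the tuple (p, g, i, j), j \<in> {1,2}.
  A local state (s, g) is encoded as (None, g), a local state (p, g) with p \<in> P as (Some p, g).\<close>

type_synonym ('p, 'g) port = "'p \<times> 'g \<times> nat \<times> nat"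
type_synonym ('p, 'g) lstate = "'p option \<times> 'g"

definition sysM_ports ::
  "'g set \<Rightarrow> 'p set \<Rightarrow> 'p \<Rightarrow> 'p \<Rightarrow> ('p \<Rightarrow> 'g \<Rightarrow> 'p \<times> 'g \<times> int) \<Rightarrow> nat \<Rightarrow> nat \<Rightarrow> ('p, 'g) port set" where
  "sysM_ports G P pY pN d n i =
     (if 1 \<le> i \<and> i \<le> n then
        {(p, g, i, j) | p g j. p \<in> P - {pY, pN} \<and> g \<in> G \<and> j \<in> {1, 2}}
      else if i = 0 then
        {(p, g, 0, 1) | p g. p \<in> P - {pY, pN} \<and> g \<in> G \<and> snd (snd (d p g)) = 1} \<union>
        {(p, g, 0, 2) | p g. p \<in> P - {pY, pN} \<and> g \<in> G \<and> snd (snd (d p g)) = -1}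
      else if i = n + 1 then
        {(p, g, n + 1, 1) | p g. p \<in> P - {pY, pN} \<and> g \<in> G \<and> snd (snd (d p g)) = -1} \<union>
        {(p, g, n + 1, 2) | p g. p \<in> P - {pY, pN} \<and> g \<in> G \<and> snd (snd (d p g)) = 1}
      else {})"

definition sysM_Int ::
  "'g set \<Rightarrow> 'p set \<Rightarrow> 'p \<Rightarrow> 'p \<Rightarrow> ('p \<Rightarrow> 'g \<Rightarrow> 'p \<times> 'g \<times> int) \<Rightarrow> nat \<Rightarrow> ('p, 'g) port set set" where
  "sysM_Int G P pY pN d n =
     {{(p, g, i, 1), (p, g, nat (int i + T), 2)} | p g i T.
        p \<in> P - {pY, pN} \<and> g \<in> G \<and> T = snd (snd (d p g)) \<and>
        i \<le> n + 1 \<and> 0 \<le> int i + T \<and> int i + T \<le> int n + 1}"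

definition sysM_Q :: "'g set \<Rightarrow> 'p set \<Rightarrow> nat \<Rightarrow> ('p, 'g) lstate set" where
  "sysM_Q G P i = {(s, g). s \<in> insert None (Some ` P) \<and> g \<in> G}"

definition sysM_trans ::
  "'g set \<Rightarrow> 'p set \<Rightarrow> 'p \<Rightarrow> 'p \<Rightarrow> ('p \<Rightarrow> 'g \<Rightarrow> 'p \<times> 'g \<times> int) \<Rightarrow> nat \<Rightarrow> nat
     \<Rightarrow> (('p, 'g) lstate \<times> ('p, 'g) port \<times> ('p, 'g) lstate) set" where
  "sysM_trans G P pY pN d n i =
     {((Some p, g), (p, g, i, 1), (None, fst (snd (d p g)))) | p g.
        p \<in> P - {pY, pN} \<and> g \<in> G \<and> (p, g, i, 1) \<in> sysM_ports G P pY pN d n i} \<union>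
     {((None, g'), (p, g, i, 2), (Some (fst (d p g)), g')) | p g g'.
        p \<in> P - {pY, pN} \<and> g \<in> G \<and> g' \<in> G \<and> (p, g, i, 2) \<in> sysM_ports G P pY pN d n i}"

definition sysM_init :: "'g \<Rightarrow> 'p \<Rightarrow> 'g list \<Rightarrow> nat \<Rightarrow> ('p, 'g) lstate" where
  "sysM_init b p0 x i =
     (let n = length x in
      if i = 0 then (None, b)
      else if i = 1 then (Some p0, x ! 0)
      else if i \<le> n then (None, x ! (i - 1))
      else if i = n + 1 then (None, b)
      else undefined)"

end

theory Submission
  imports Defs
begin

fun enc :: "nat \<Rightarrow> ('p, 'g) config \<Rightarrow> nat \<Rightarrow> ('p, 'g) lstate" where
  "enc n (p, t, h) = (\<lambda>i. if i \<le> n + 1 then (if int i = h then Some p else None, t (int i)) else undefined)"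

lemma ports_idx:
  "a \<in> sysM_ports G P pY pN d n k \<Longrightarrow> fst (snd (snd a)) = k"
  unfolding sysM_ports_def by (auto split: if_splits)

lemma trans1:
  "(s, (p, g, i, 1), s') \<in> sysM_trans G P pY pN d n i \<longleftrightarrow>
    s = (Some p, g) \<and> s' = (None, fst (snd (d p g))) \<and> p \<in> P - {pY, pN} \<and> g \<in> G
     \<and> (p, g, i, 1) \<in> sysM_ports G P pY pN d n i"
  unfolding sysM_trans_def by auto

lemma trans2:
  "(s, (p, g, i, 2), s') \<in> sysM_trans G P pY pN d n i \<longleftrightarrow>
    (\<exists>g'. s = (None, g') \<and> s' = (Some (fst (d p g)), g') \<and> g' \<in> G) \<and> p \<in> P - {pY, pN} \<and> g \<in> G
     \<and> (p, g, i, 2) \<in> sysM_ports G P pY pN d n i"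
  unfolding sysM_trans_def by auto

lemma ports_mem:
  assumes "p \<in> P - {pY, pN}" "g \<in> G" "i \<le> n + 1" "T = snd (snd (d p g))"
    "0 \<le> int i + T" "int i + T \<le> int n + 1" "T \<in> {-1, 1}"
  shows "(p, g, i, 1) \<in> sysM_ports G P pY pN d n i"
    and "(p, g, nat (int i + T), 2) \<in> sysM_ports G P pY pN d n (nat (int i + T))"
  using assms unfolding sysM_ports_def by (auto split: if_splits)

lemma inter_ports:
  assumes "i \<noteq> j" "(p, g, i, 1) \<in> sysM_ports G P pY pN d n i"
    "(p, g, j, 2) \<in> sysM_ports G P pY pN d n j"
  shows "{(p, g, i, 1), (p, g, j, 2)} \<inter> sysM_ports G P pY pN d n k =
    (if k = i then {(p, g, i, 1)} else if k = j then {(p, g, j, 2)} else {})"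
proof -
  have "\<And>a. a \<in> sysM_ports G P pY pN d n k \<Longrightarrow> fst (snd (snd a)) = k" by (rule ports_idx)
  then show ?thesis using assms by (auto; fastforce)
qed

lemma gstep_char:
  assumes "i \<noteq> j" "(p, g, i, 1) \<in> sysM_ports G P pY pN d n i"
    "(p, g, j, 2) \<in> sysM_ports G P pY pN d n j" "i \<in> K" "j \<in> K" "\<alpha> \<in> I"
    "\<alpha> = {(p, g, i, 1), (p, g, j, 2)}"
  shows "(q, q') \<in> global_step K (sysM_ports G P pY pN d n) I Q Tr \<alpha> \<longleftrightarrow>
     q \<in> PiE K Q \<and> q' \<in> PiE K Q \<and> (q i, (p, g, i, 1), q' i) \<in> Tr i \<and>
     (q j, (p, g, j, 2), q' j) \<in> Tr j \<and> (\<forall>k\<in>K. k \<noteq> i \<longrightarrow> k \<noteq> j \<longrightarrow> q k = q' k)"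
  using assms(1,4-6) unfolding global_step_def assms(7) inter_ports[OF assms(1-3)]
  by (auto split: if_splits)

context
  fixes G S :: "'g set" and b :: 'g and P :: "'p set" and p0 pY pN :: 'p
    and d :: "'p \<Rightarrow> 'g \<Rightarrow> 'p \<times> 'g \<times> int" and x :: "'g list"
  assumes dtm: "is_DTM G S b P p0 pY pN d"
    and lb: "linear_bounded S b p0 pY pN d"
    and xS: "x \<in> lists S"
    and xl: "length x \<ge> 1"
begin

lemma SG: "S \<subseteq> G" and bG: "b \<in> G" and p0P: "p0 \<in> P" and pYP: "pY \<in> P"
  using dtm unfolding is_DTM_def by simp_all

lemma dP: "p \<in> P - {pY, pN} \<Longrightarrow> g \<in> G \<Longrightarrow>
   fst (d p g) \<in> P \<and> fst (snd (d p g)) \<in> G \<and> snd (snd (d p g)) \<in> {-1, 1}"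
  using dtm unfolding is_DTM_def by blast

lemma reach_conf:
  "(tm_init b p0 x, c) \<in> (tm_step pY pN d)\<^sup>* \<Longrightarrow> fst c \<in> P \<and> (\<forall>k. fst (snd c) k \<in> G)"
proof (induction rule: rtrancl_induct)
  case base
  have "\<forall>k. fst (snd (tm_init b p0 x)) k \<in> G"
  proof
    fix k
    show "fst (snd (tm_init b p0 x)) k \<in> G"
    proof (cases "1 \<le> k \<and> k \<le> int (length x)")
      case True
      then have "nat k - 1 < length x" by linarith
      then have "x ! (nat k - 1) \<in> S" using xS by (meson in_listsD nth_mem)
      moreover have "fst (snd (tm_init b p0 x)) k = x ! (nat k - 1)" using True unfolding tm_init_def by simp
      ultimately show ?thesis using SG by auto
    next
      case False
      then have "fst (snd (tm_init b p0 x)) k = b" unfolding tm_init_def by auto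
      then show ?thesis using bG by simp
    qed
  qed
  moreover have "fst (tm_init b p0 x) \<in> P" using p0P unfolding tm_init_def by simp
  ultimately show ?case by blast
next
  case (step y z)
  obtain p t h where y: "y = (p, t, h)" by (cases y)
  have pP: "p \<in> P" and tG: "\<And>k. t k \<in> G" using step.IH y by auto
  have nh: "p \<noteq> pY" "p \<noteq> pN" and z: "z = (fst (d p (t h)), t(h := fst (snd (d p (t h)))), h + snd (snd (d p (t h))))"
    using step.hyps(2) y unfolding tm_step_def by auto
  have "fst (d p (t h)) \<in> P \<and> fst (snd (d p (t h))) \<in> G"
    using dP[of p "t h"] pP tG[of h] nh by blast
  then show ?case using z tG by auto
qed

lemma reach_h:
  "(tm_init b p0 x, (p, t, h)) \<in> (tm_step pY pN d)\<^sup>* \<Longrightarrow> 0 \<le> h \<and> h \<le> int (length x) + 1"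
  using lb xS unfolding linear_bounded_def by blast

lemma enc_PiE:
  assumes "p \<in> P" "\<And>k. t k \<in> G"
  shows "enc (length x) (p, t, h) \<in> PiE {0..length x + 1} (sysM_Q G P)"
  using assms unfolding sysM_Q_def PiE_def extensional_def by auto

lemma init_enc: "enc (length x) (tm_init b p0 x) = sysM_init b p0 x"
proof
  fix i
  show "enc (length x) (tm_init b p0 x) i = sysM_init b p0 x i"
  proof (cases "i = 0")
    case True then show ?thesis unfolding tm_init_def sysM_init_def by simp
  next
    case False
    then have "int i \<ge> 1" by simp
    show ?thesis
    proof (cases "i \<le> length x")
      case True
      then have "x ! (nat (int i) - 1) = x ! (i - 1)" by simp
      then show ?thesis using True False xl unfolding tm_init_def sysM_init_def by (auto simp: Let_def)
    next
      case f2: False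
      then show ?thesis using False xl unfolding tm_init_def sysM_init_def by (auto simp: Let_def)
    qed
  qed
qed

lemma fwd:
  "(tm_init b p0 x, c) \<in> (tm_step pY pN d)\<^sup>* \<Longrightarrow>
   global_reachable {0..length x + 1} (sysM_ports G P pY pN d (length x))
            (sysM_Int G P pY pN d (length x)) (sysM_Q G P)
            (sysM_trans G P pY pN d (length x)) (sysM_init b p0 x) (enc (length x) c)"
proof (induction rule: rtrancl_induct)
  case base
  then show ?case unfolding global_reachable_def init_enc by simp
next
  case (step y z)
  obtain p t h where y: "y = (p, t, h)" by (cases y)
  define n where "n = length x"
  define g where "g = t h"
  define T where "T = snd (snd (d p g))"
  define h' where "h' = h + T"
  define g2 where "g2 = fst (snd (d p g))"
  define p2 where "p2 = fst (d p g)"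
  have ry: "(tm_init b p0 x, (p, t, h)) \<in> (tm_step pY pN d)\<^sup>*" using step.hyps(1) y by simp
  have nh: "p \<noteq> pY" "p \<noteq> pN" and z: "z = (p2, t(h := g2), h')"
    using step.hyps(2) y unfolding tm_step_def p2_def g2_def h'_def T_def g_def by auto
  have rz: "(tm_init b p0 x, (p2, t(h := g2), h')) \<in> (tm_step pY pN d)\<^sup>*"
    using step.hyps z by (metis rtrancl.rtrancl_into_rtrancl y)
  have pP: "p \<in> P" and tG: "\<And>k. t k \<in> G" using reach_conf[OF ry] by auto
  have p2P: "p2 \<in> P" and t2G: "\<And>k. (t(h := g2)) k \<in> G" using reach_conf[OF rz] by auto
  have gG: "g \<in> G" using tG g_def by simp
  have pP': "p \<in> P - {pY, pN}" using pP nh by simp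
  have T: "T \<in> {-1, 1}" using dP[OF pP' gG] T_def by simp
  have hb: "0 \<le> h" "h \<le> int n + 1" using reach_h[OF ry] n_def by auto
  have hb': "0 \<le> h'" "h' \<le> int n + 1" using reach_h[OF rz] n_def by auto
  define i where "i = nat h"
  define j where "j = nat h'"
  have ii: "int i = h" using hb i_def by simp
  have jj: "int j = h'" using hb' j_def by simp
  have ij: "i \<noteq> j" using ii jj T h'_def by auto
  have jT: "j = nat (int i + T)" using j_def ii h'_def by simp
  have iK: "i \<in> {0..n+1}" and jK: "j \<in> {0..n+1}" using ii jj hb hb' by auto
  have pt1: "(p, g, i, 1) \<in> sysM_ports G P pY pN d n i"
    by (rule ports_mem(1)[where T=T]) (use pP' gG T_def T iK ii jj jT hb' h'_def in auto)
  have pt2: "(p, g, j, 2) \<in> sysM_ports G P pY pN d n j"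
    unfolding jT by (rule ports_mem(2)[where T=T]) (use pP' gG T_def T iK ii jj jT hb' h'_def in auto)
  define \<alpha> where "\<alpha> = {(p, g, i, 1::nat), (p, g, j, 2::nat)}"
  have aI: "\<alpha> \<in> sysM_Int G P pY pN d n"
    unfolding sysM_Int_def \<alpha>_def using pP' gG T_def iK jT ii hb' h'_def
    by (intro CollectI exI[of _ p] exI[of _ g] exI[of _ i] exI[of _ T]) auto
  have "(enc n (p, t, h), enc n (p2, t(h := g2), h')) \<in>
      global_step {0..n+1} (sysM_ports G P pY pN d n) (sysM_Int G P pY pN d n) (sysM_Q G P)
        (sysM_trans G P pY pN d n) \<alpha>"
  proof (subst gstep_char[OF ij pt1 pt2 iK jK aI \<alpha>_def], intro conjI)
    show "enc n (p, t, h) \<in> PiE {0..n+1} (sysM_Q G P)" using enc_PiE[OF pP tG] n_def by simp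
    show "enc n (p2, t(h := g2), h') \<in> PiE {0..n+1} (sysM_Q G P)" using enc_PiE[of p2 "t(h := g2)" h', OF p2P t2G] n_def by simp
    show "(enc n (p, t, h) i, (p, g, i, 1), enc n (p2, t(h := g2), h') i) \<in> sysM_trans G P pY pN d n i"
      unfolding trans1 using iK ii jj ij pP' gG pt1 g_def g2_def by auto
    show "(enc n (p, t, h) j, (p, g, j, 2), enc n (p2, t(h := g2), h') j) \<in> sysM_trans G P pY pN d n j"
      unfolding trans2 using jK ii jj ij pP' gG pt2 tG p2_def by auto
    show "\<forall>k\<in>{0..n + 1}. k \<noteq> i \<longrightarrow> k \<noteq> j \<longrightarrow> enc n (p, t, h) k = enc n (p2, t(h := g2), h') k"
      using ii jj by auto
  qed
  then have "(enc n y, enc n z) \<in> (\<Union>\<alpha>\<in>sysM_Int G P pY pN d n.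
      global_step {0..n+1} (sysM_ports G P pY pN d n) (sysM_Int G P pY pN d n) (sysM_Q G P)
        (sysM_trans G P pY pN d n) \<alpha>)" using aI y z by blast
  then show ?case using step.IH unfolding global_reachable_def n_def
    by (meson rtrancl.rtrancl_into_rtrancl)
qed

lemma bwd:
  assumes "global_reachable {0..length x + 1} (sysM_ports G P pY pN d (length x))
            (sysM_Int G P pY pN d (length x)) (sysM_Q G P)
            (sysM_trans G P pY pN d (length x)) (sysM_init b p0 x) q"
  shows "\<exists>c. (tm_init b p0 x, c) \<in> (tm_step pY pN d)\<^sup>* \<and> q = enc (length x) c"
  using assms unfolding global_reachable_def
proof (induction rule: rtrancl_induct)
  case base
  then show ?case using init_enc by (metis rtrancl.rtrancl_refl)
next
  case (step q q')
  define n where "n = length x"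
  obtain c where rc: "(tm_init b p0 x, c) \<in> (tm_step pY pN d)\<^sup>*" and qc: "q = enc n c"
    using step.IH n_def by blast
  obtain pc t h where c: "c = (pc, t, h)" by (cases c)
  obtain \<alpha> where aI: "\<alpha> \<in> sysM_Int G P pY pN d n" and st: "(q, q') \<in>
      global_step {0..n+1} (sysM_ports G P pY pN d n) (sysM_Int G P pY pN d n) (sysM_Q G P)
        (sysM_trans G P pY pN d n) \<alpha>" using step.hyps(2) n_def by blast
  obtain p g i T where a: "\<alpha> = {(p, g, i, 1), (p, g, nat (int i + T), 2)}"
    and pP': "p \<in> P - {pY, pN}" and gG: "g \<in> G" and T_def: "T = snd (snd (d p g))"
    and iK0: "i \<le> n + 1" and b1: "0 \<le> int i + T" and b2: "int i + T \<le> int n + 1"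
    using aI unfolding sysM_Int_def by blast
  define j where "j = nat (int i + T)"
  have T: "T \<in> {-1, 1}" using dP[OF pP' gG] T_def by simp
  have jj: "int j = int i + T" using b1 j_def by simp
  have ij: "i \<noteq> j" using jj T by auto
  have iK: "i \<in> {0..n+1}" and jK: "j \<in> {0..n+1}" using iK0 jj b2 by auto
  have pt1: "(p, g, i, 1) \<in> sysM_ports G P pY pN d n i"
    by (rule ports_mem(1)[where T=T]) (use pP' gG T_def T iK0 b1 b2 in auto)
  have pt2: "(p, g, j, 2) \<in> sysM_ports G P pY pN d n j"
    unfolding j_def by (rule ports_mem(2)[where T=T]) (use pP' gG T_def T iK0 b1 b2 in auto)
  have ad: "\<alpha> = {(p, g, i, 1), (p, g, j, 2)}" using a j_def by simp
  note gs = st[unfolded gstep_char[OF ij pt1 pt2 iK jK aI ad]]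
  have qPi: "q' \<in> PiE {0..n+1} (sysM_Q G P)" using gs by blast
  have tr1: "(q i, (p, g, i, 1), q' i) \<in> sysM_trans G P pY pN d n i" using gs by blast
  have tr2: "(q j, (p, g, j, 2), q' j) \<in> sysM_trans G P pY pN d n j" using gs by blast
  have oth: "\<And>k. k \<in> {0..n+1} \<Longrightarrow> k \<noteq> i \<Longrightarrow> k \<noteq> j \<Longrightarrow> q k = q' k" using gs by blast
  have qi: "q i = (Some p, g)" and q'i: "q' i = (None, fst (snd (d p g)))"
    using tr1 unfolding trans1 by auto
  obtain g' where qj: "q j = (None, g')" and q'j: "q' j = (Some (fst (d p g)), g')"
    using tr2 unfolding trans2 by auto
  have hi: "h = int i" and pc: "pc = p" and tg: "t h = g"
    using qi iK unfolding qc c by (auto split: if_splits)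
  define c' where "c' = (fst (d p g), t(h := fst (snd (d p g))), h + T)"
  have "(c, c') \<in> tm_step pY pN d"
    unfolding c c'_def tm_step_def using pP' pc tg T_def by auto
  then have rc': "(tm_init b p0 x, c') \<in> (tm_step pY pN d)\<^sup>*"
    using rc by (meson rtrancl.rtrancl_into_rtrancl)
  have "q' = enc n c'"
  proof
    fix k
    show "q' k = enc n c' k"
    proof (cases "k \<le> n + 1")
      case False
      then have "k \<notin> {0..n+1}" by simp
      then have "q' k = undefined" by (rule PiE_arb[OF qPi])
      moreover have "enc n c' k = undefined" using False unfolding c'_def by simp
      ultimately show ?thesis by simp
    next
      case True
      show ?thesis
      proof (cases "k = i")
        case True
        then show ?thesis using q'i hi T iK unfolding c'_def by auto
      next
        case ki: False
        show ?thesis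
        proof (cases "k = j")
          case kj: True
          have "q j = enc n c j" using qc by simp
          then have "g' = t (int j)" using qj jK unfolding c by (auto split: if_splits)
          then show ?thesis using kj q'j hi jj ij jK unfolding c'_def by auto
        next
          case kj: False
          have "q k = enc n c k" using qc by simp
          moreover have "q k = q' k" using oth[OF _ ki kj] True by simp
          moreover have "int k \<noteq> h" "int k \<noteq> h + T" using ki kj hi jj by auto
          then have "enc n c k = enc n c' k" using True unfolding c c'_def by simp
          ultimately show ?thesis by simp
        qed
      qed
    qed
  qed
  then show ?case using rc' n_def by blast
qed

end

theorem mainTheorem1:
  fixes G S :: "'g set" and b :: 'g and P :: "'p set" and p0 pY pN :: 'p
    and d :: "'p \<Rightarrow> 'g \<Rightarrow> 'p \<times> 'g \<times> int" and x :: "'g list"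
  assumes "is_DTM G S b P p0 pY pN d"
    and "linear_bounded S b p0 pY pN d"
    and "x \<in> lists S"
    and "length x \<ge> 1"
  shows "tm_accepts b p0 pY pN d x \<longleftrightarrow>
    (\<exists>q. global_reachable {0..length x + 1} (sysM_ports G P pY pN d (length x))
            (sysM_Int G P pY pN d (length x)) (sysM_Q G P)
            (sysM_trans G P pY pN d (length x)) (sysM_init b p0 x) q
         \<and> (\<exists>i \<in> {0..length x + 1}. \<exists>g \<in> G. q i = (Some pY, g)))"
proof
  assume "tm_accepts b p0 pY pN d x"
  then obtain t h where r: "(tm_init b p0 x, (pY, t, h)) \<in> (tm_step pY pN d)\<^sup>*"
    unfolding tm_accepts_def by blast
  have hb: "0 \<le> h" "h \<le> int (length x) + 1" using reach_h[OF assms r] by auto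
  have tG: "t h \<in> G" using reach_conf[OF assms r] by auto
  have "enc (length x) (pY, t, h) (nat h) = (Some pY, t h)" using hb by auto
  then show "\<exists>q. global_reachable {0..length x + 1} (sysM_ports G P pY pN d (length x))
            (sysM_Int G P pY pN d (length x)) (sysM_Q G P)
            (sysM_trans G P pY pN d (length x)) (sysM_init b p0 x) q
         \<and> (\<exists>i \<in> {0..length x + 1}. \<exists>g \<in> G. q i = (Some pY, g))"
    using fwd[OF assms r] hb tG by (intro exI[of _ "enc (length x) (pY, t, h)"] conjI bexI[of _ "nat h"]) auto
next
  assume "\<exists>q. global_reachable {0..length x + 1} (sysM_ports G P pY pN d (length x))
            (sysM_Int G P pY pN d (length x)) (sysM_Q G P)
            (sysM_trans G P pY pN d (length x)) (sysM_init b p0 x) q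
         \<and> (\<exists>i \<in> {0..length x + 1}. \<exists>g \<in> G. q i = (Some pY, g))"
  then obtain q i g where gr: "global_reachable {0..length x + 1} (sysM_ports G P pY pN d (length x))
            (sysM_Int G P pY pN d (length x)) (sysM_Q G P)
            (sysM_trans G P pY pN d (length x)) (sysM_init b p0 x) q"
    and iK: "i \<in> {0..length x + 1}" and qi: "q i = (Some pY, g)" by blast
  obtain c where rc: "(tm_init b p0 x, c) \<in> (tm_step pY pN d)\<^sup>*" and qc: "q = enc (length x) c"
    using bwd[OF assms gr] by blast
  obtain p t h where c: "c = (p, t, h)" by (cases c)
  have "p = pY" using qi iK unfolding qc c by (auto split: if_splits)
  then show "tm_accepts b p0 pY pN d x" unfolding tm_accepts_def using rc c by blast
qed

end
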